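(* For every natural number $n\ge 2$, the simplicial complex ${\rm Bd}(\mathrm{DG}_n)$ collapses onto $\Delta(\bar\Pi_n)$ (where a simplex of $\mathrm{DG}_n$ is identified with the set partition of $[n]$ into the connected components of the corresponding graph).
   Context: $\mathrm{DG}_n$ is the simplicial complex whose vertices are all pairs $(i,j)$ with $1\le i<j\le n$ (possible edges of a graph on vertex set $[n]=\{1,\dots,n\}$) and whose simplices are the nonempty sets of such edges forming a graph on $[n]$ with at least two connected components. $\Pi_n$ is the partition lattice of all set partitions of $[n]$ ordered by refinement, $\bar\Pi_n=\Pi_n\setminus\{\hat0,\hat1\}$. ${\rm Bd}$ denotes barycentric subdivision and $\Delta(Q)$ the order complex of a poset $Q$ (simplices = nonempty chains). *)

theory Defs
  imports Main "HOL-Library.Disjoint_Sets"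
begin

text \<open>A (finite abstract) simplicial complex is a set of faces; a face is a nonempty
finite set of vertices.\<close>

definition elementary_collapse :: "'a set set \<Rightarrow> 'a set set \<Rightarrow> bool" where
  "elementary_collapse K L \<longleftrightarrow>
     (\<exists>\<sigma> \<tau>. \<sigma> \<in> K \<and> \<tau> \<in> K \<and> \<sigma> \<subset> \<tau> \<and> card \<tau> = card \<sigma> + 1 \<and>
        (\<forall>\<rho>\<in>K. \<sigma> \<subseteq> \<rho> \<longrightarrow> \<rho> = \<sigma> \<or> \<rho> = \<tau>) \<and>
        L = K - {\<sigma>, \<tau>})"

definition collapses_onto :: "'a set set \<Rightarrow> 'a set set \<Rightarrow> bool" where
  "collapses_onto K L \<longleftrightarrow> elementary_collapse\<^sup>*\<^sup>* K L"

definition order_complex :: "'a set \<Rightarrow> ('a \<Rightarrow> 'a \<Rightarrow> bool) \<Rightarrow> 'a set set" where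
  "order_complex P le =
     {c. c \<noteq> {} \<and> finite c \<and> c \<subseteq> P \<and> (\<forall>x\<in>c. \<forall>y\<in>c. le x y \<or> le y x)}"

definition Bd :: "'a set set \<Rightarrow> 'a set set set" where
  "Bd K = order_complex K (\<subseteq>)"

definition edges :: "nat \<Rightarrow> (nat \<times> nat) set" where
  "edges n = {(i, j). 1 \<le> i \<and> i < j \<and> j \<le> n}"

definition graph_rel :: "nat \<Rightarrow> (nat \<times> nat) set \<Rightarrow> (nat \<times> nat) set" where
  "graph_rel n G = ({(i, j). (i, j) \<in> G \<or> (j, i) \<in> G})\<^sup>* \<inter> ({1..n} \<times> {1..n})"

definition components :: "nat \<Rightarrow> (nat \<times> nat) set \<Rightarrow> nat set set" where
  "components n G = {1..n} // graph_rel n G"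

definition DG :: "nat \<Rightarrow> (nat \<times> nat) set set" where
  "DG n = {G. G \<noteq> {} \<and> G \<subseteq> edges n \<and> card (components n G) \<ge> 2}"

definition Pi_lattice :: "nat \<Rightarrow> nat set set set" where
  "Pi_lattice n = {P. partition_on {1..n} P}"

definition refines :: "nat set set \<Rightarrow> nat set set \<Rightarrow> bool" where
  "refines P Q \<longleftrightarrow> (\<forall>B\<in>P. \<exists>C\<in>Q. B \<subseteq> C)"

definition bottom_partition :: "nat \<Rightarrow> nat set set" where
  "bottom_partition n = {{i} | i. i \<in> {1..n}}"

definition top_partition :: "nat \<Rightarrow> nat set set" where
  "top_partition n = {{1..n}}"

definition Pi_bar :: "nat \<Rightarrow> nat set set set" where
  "Pi_bar n = Pi_lattice n - {bottom_partition n, top_partition n}"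

text \<open>Embedding of partitions into faces of DG n: a partition is identified with the
graph whose edges are all pairs inside a common block (its components are the blocks).\<close>

definition clique_graph :: "nat \<Rightarrow> nat set set \<Rightarrow> (nat \<times> nat) set" where
  "clique_graph n P = {(i, j) \<in> edges n. \<exists>B\<in>P. i \<in> B \<and> j \<in> B}"

end

theory Submission
  imports Defs
begin

lemma ec_intro:
  assumes "\<sigma> \<in> K" "\<tau> \<in> K" "\<sigma> \<subset> \<tau>" "card \<tau> = card \<sigma> + 1"
    "\<forall>\<rho>\<in>K. \<sigma> \<subseteq> \<rho> \<longrightarrow> \<rho> = \<sigma> \<or> \<rho> = \<tau>"
  shows "elementary_collapse K (K - {\<sigma>, \<tau>})"
  unfolding elementary_collapse_def using assms by blast

lemma remove_pairs:
  fixes K :: "'b set set"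
  assumes S_def: "S = {c\<in>K. x\<in>c \<and> a\<notin>c}"
  and closed_ins: "\<forall>c\<in>S. insert a c \<in> K"
  and down: "\<forall>\<rho>\<in>K. x \<in> \<rho> \<longrightarrow> a \<in> \<rho> \<longrightarrow> \<rho> - {a} \<in> K"
  and finK: "\<forall>c\<in>K. finite c"
  shows "T \<subseteq> S \<Longrightarrow> finite T \<Longrightarrow> (\<forall>c\<in>T. \<forall>c'\<in>S. c \<subseteq> c' \<longrightarrow> c' \<in> T)
     \<Longrightarrow> collapses_onto K (K - T - insert a ` T)"
proof (induction "card T" arbitrary: T rule: less_induct)
  case less
  show ?case
  proof (cases "T = {}")
    case True then show ?thesis by (simp add: collapses_onto_def)
  next
    case False
    have "Min (card ` T) \<in> card ` T" using Min_in[of "card ` T"] less.prems False by auto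
    then obtain c where c: "c \<in> T" "card c = Min (card ` T)" by auto
    have cmin: "\<forall>d\<in>T. card c \<le> card d" using c less.prems by simp
    have cS: "c \<in> S" using c less.prems by auto
    hence cK: "c \<in> K" and xc: "x \<in> c" and ac: "a \<notin> c" using S_def by auto
    have fc: "finite c" using cK finK by auto
    define T' where "T' = T - {c}"
    have up': "\<forall>d\<in>T'. \<forall>d'\<in>S. d \<subseteq> d' \<longrightarrow> d' \<in> T'"
    proof (intro ballI impI)
      fix d d' assume d: "d \<in> T'" "d' \<in> S" "d \<subseteq> d'"
      have "d' \<in> T" using d less.prems unfolding T'_def by blast
      moreover have "d' \<noteq> c"
      proof
        assume "d' = c"
        hence "d \<subset> c" using d unfolding T'_def by blast
        hence "card d < card c" using fc psubset_card_mono by blast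
        moreover have "d \<in> T" using d T'_def by auto
        ultimately show False using cmin by force
      qed
      ultimately show "d' \<in> T'" unfolding T'_def by blast
    qed
    have lt: "card T' < card T" unfolding T'_def using c less.prems
      by (meson card_Diff1_less)
    have IH: "collapses_onto K (K - T' - insert a ` T')"
      using less.hyps[OF lt] less.prems up' unfolding T'_def by blast
    define L where "L = K - T' - insert a ` T'"
    have ec: "elementary_collapse L (L - {c, insert a c})"
    proof (rule ec_intro)
      show "c \<in> L" unfolding L_def T'_def using cK ac by auto
      have "insert a c \<in> K" using closed_ins cS by blast
      moreover have "insert a c \<notin> T'" using less.prems unfolding T'_def S_def by auto
      moreover have "insert a c \<notin> insert a ` T'"
      proof
        assume "insert a c \<in> insert a ` T'"
        then obtain d where d: "d \<in> T'" "insert a c = insert a d" by auto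
        have "a \<notin> d" using d less.prems unfolding T'_def S_def by auto
        hence "d = c" using d(2) ac by (metis Diff_insert_absorb)
        thus False using d(1) T'_def by auto
      qed
      ultimately show "insert a c \<in> L" unfolding L_def by blast
      show "c \<subset> insert a c" using ac by auto
      show "card (insert a c) = card c + 1" using ac fc by simp
      show "\<forall>\<rho>\<in>L. c \<subseteq> \<rho> \<longrightarrow> \<rho> = c \<or> \<rho> = insert a c"
      proof (intro ballI impI)
        fix \<rho> assume r: "\<rho> \<in> L" "c \<subseteq> \<rho>"
        hence rK: "\<rho> \<in> K" and rT: "\<rho> \<notin> T'" and rI: "\<rho> \<notin> insert a ` T'"
          unfolding L_def by auto
        show "\<rho> = c \<or> \<rho> = insert a c"
        proof (cases "a \<in> \<rho>")
          case False
          hence "\<rho> \<in> S" using rK r xc S_def by auto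
          hence "\<rho> \<in> T" using less.prems c r by blast
          thus ?thesis using rT T'_def by auto
        next
          case True
          define d where "d = \<rho> - {a}"
          have "d \<in> K" using down rK True r xc d_def by blast
          moreover have "x \<in> d" using xc ac r d_def by auto
          ultimately have dS: "d \<in> S" using S_def d_def by auto
          have "c \<subseteq> d" using r ac d_def by auto
          hence "d \<in> T" using less.prems c dS by blast
          moreover have rd: "\<rho> = insert a d" using True d_def by auto
          ultimately have "d = c" using rI T'_def by auto
          thus ?thesis using rd by simp
        qed
      qed
    qed
    have eq: "L - {c, insert a c} = K - T - insert a ` T"
      unfolding L_def T'_def using c by auto
    show ?thesis using IH ec eq unfolding collapses_onto_def L_def
      by (metis rtranclp.rtrancl_into_rtrancl)
  qed
qed

lemma finite_order_complex:
  "finite P \<Longrightarrow> finite (order_complex P le)"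
  unfolding order_complex_def
  by (rule finite_subset[of _ "Pow P"]) auto

lemma remove_vertex:
  fixes P :: "'a set set"
  assumes fin: "finite P" and xP: "x \<in> P" and aP: "a \<in> P" and xa: "x \<subset> a"
    and up: "\<forall>y\<in>P. x \<subset> y \<longrightarrow> a \<subseteq> y"
  shows "collapses_onto (order_complex P (\<subseteq>)) (order_complex (P - {x}) (\<subseteq>))"
proof -
  define K where "K = order_complex P (\<subseteq>)"
  define S where "S = {c\<in>K. x\<in>c \<and> a\<notin>c}"
  have ins: "\<forall>c\<in>S. insert a c \<in> K"
  proof
    fix c assume "c \<in> S"
    hence c: "c \<in> K" "x \<in> c" "a \<notin> c" using S_def by auto
    have comp: "\<forall>y\<in>c. y \<subseteq> a \<or> a \<subseteq> y"
    proof
      fix y assume y: "y \<in> c"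
      have "y \<subseteq> x \<or> x \<subseteq> y" using c y unfolding K_def order_complex_def by auto
      moreover have "y \<in> P" using c y unfolding K_def order_complex_def by auto
      ultimately show "y \<subseteq> a \<or> a \<subseteq> y" using up xa by blast
    qed
    show "insert a c \<in> K" using c comp aP unfolding K_def order_complex_def by auto
  qed
  have down: "\<forall>\<rho>\<in>K. x \<in> \<rho> \<longrightarrow> a \<in> \<rho> \<longrightarrow> \<rho> - {a} \<in> K"
    using xa unfolding K_def order_complex_def by auto
  have finK: "\<forall>c\<in>K. finite c" unfolding K_def order_complex_def by auto
  have finS: "finite S" unfolding S_def K_def using finite_order_complex[OF fin] by auto
  have "collapses_onto K (K - S - insert a ` S)"
    using remove_pairs[OF S_def ins down finK, of S] finS by blast
  moreover have "K - S - insert a ` S = order_complex (P - {x}) (\<subseteq>)"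
  proof (intro set_eqI iffI)
    fix c assume c: "c \<in> K - S - insert a ` S"
    have "x \<notin> c"
    proof
      assume xc: "x \<in> c"
      show False
      proof (cases "a \<in> c")
        case False thus False using c xc S_def by auto
      next
        case True
        have "c - {a} \<in> S" using down c xc True xa S_def by auto
        moreover have "c = insert a (c - {a})" using True by auto
        ultimately show False using c by blast
      qed
    qed
    thus "c \<in> order_complex (P - {x}) (\<subseteq>)" using c unfolding K_def order_complex_def by auto
  next
    fix c assume c: "c \<in> order_complex (P - {x}) (\<subseteq>)"
    hence "c \<in> K" "x \<notin> c" unfolding K_def order_complex_def by auto
    thus "c \<in> K - S - insert a ` S" unfolding S_def by auto
  qed
  ultimately show ?thesis unfolding K_def by simp
qed

lemma closure_collapse:
  fixes P :: "'a set set"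
  shows "finite P \<Longrightarrow> (\<forall>x\<in>P. \<phi> x \<in> P \<and> x \<subseteq> \<phi> x \<and> \<phi> (\<phi> x) = \<phi> x)
    \<Longrightarrow> (\<forall>x\<in>P. \<forall>y\<in>P. x \<subseteq> y \<longrightarrow> \<phi> x \<subseteq> \<phi> y)
    \<Longrightarrow> collapses_onto (order_complex P (\<subseteq>)) (order_complex {x\<in>P. \<phi> x = x} (\<subseteq>))"
proof (induction "card {x\<in>P. \<phi> x \<noteq> x}" arbitrary: P rule: less_induct)
  case less
  show ?case
  proof (cases "{x\<in>P. \<phi> x \<noteq> x} = {}")
    case True
    hence "{x\<in>P. \<phi> x = x} = P" by auto
    thus ?thesis by (simp add: collapses_onto_def)
  next
    case False
    have finN: "finite {x\<in>P. \<phi> x \<noteq> x}" using less.prems by auto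
    obtain x where x: "x \<in> {x\<in>P. \<phi> x \<noteq> x}"
      "\<forall>b\<in>{x\<in>P. \<phi> x \<noteq> x}. x \<le> b \<longrightarrow> x = b"
      using finite_has_maximal[OF finN False] by blast
    have xP: "x \<in> P" and xn: "\<phi> x \<noteq> x" using x by auto
    have xa: "x \<subset> \<phi> x" using xP xn less.prems by auto
    have aP: "\<phi> x \<in> P" using xP less.prems by auto
    have up: "\<forall>y\<in>P. x \<subset> y \<longrightarrow> \<phi> x \<subseteq> y"
    proof (intro ballI impI)
      fix y assume y: "y \<in> P" "x \<subset> y"
      have "\<phi> y = y" using x y by auto
      thus "\<phi> x \<subseteq> y" using less.prems xP y by force
    qed
    have c1: "collapses_onto (order_complex P (\<subseteq>)) (order_complex (P - {x}) (\<subseteq>))"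
      using remove_vertex[OF less.prems(1) xP aP xa up] .
    have eqN: "{y\<in>P - {x}. \<phi> y \<noteq> y} = {x\<in>P. \<phi> x \<noteq> x} - {x}" by auto
    have lt: "card {y\<in>P - {x}. \<phi> y \<noteq> y} < card {x\<in>P. \<phi> x \<noteq> x}"
      unfolding eqN using finN x(1) by (meson card_Diff1_less)
    have pres: "\<forall>y\<in>P - {x}. \<phi> y \<in> P - {x} \<and> y \<subseteq> \<phi> y \<and> \<phi> (\<phi> y) = \<phi> y"
      using less.prems xn by (metis Diff_iff singletonD)
    have c2: "collapses_onto (order_complex (P - {x}) (\<subseteq>)) (order_complex {y\<in>P - {x}. \<phi> y = y} (\<subseteq>))"
      using less.hyps[OF lt] less.prems pres by auto
    have "{y\<in>P - {x}. \<phi> y = y} = {y\<in>P. \<phi> y = y}" using xn by auto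
    thus ?thesis using c1 c2 unfolding collapses_onto_def by (metis rtranclp_trans)
  qed
qed


definition phi :: "nat \<Rightarrow> (nat \<times> nat) set \<Rightarrow> (nat \<times> nat) set" where
  "phi n G = clique_graph n (components n G)"

lemma equiv_graph_rel: "equiv {1..n} (graph_rel n G)"
proof (rule equivI)
  let ?R = "{(i, j). (i, j) \<in> G \<or> (j, i) \<in> G}"
  show "graph_rel n G \<subseteq> {1..n} \<times> {1..n}" unfolding graph_rel_def by auto
  show "refl_on {1..n} (graph_rel n G)" unfolding refl_on_def graph_rel_def by auto
  have "sym (?R\<^sup>*)" by (rule sym_rtrancl) (auto simp: sym_def)
  thus "sym (graph_rel n G)" unfolding graph_rel_def sym_def by blast
  show "trans (graph_rel n G)" unfolding graph_rel_def
  proof (rule transI)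
    fix x y z assume "(x, y) \<in> ?R\<^sup>* \<inter> {1..n} \<times> {1..n}" "(y, z) \<in> ?R\<^sup>* \<inter> {1..n} \<times> {1..n}"
    thus "(x, z) \<in> ?R\<^sup>* \<inter> {1..n} \<times> {1..n}" using rtrancl_trans[of x y ?R z] by blast
  qed
qed

lemma clique_quotient:
  assumes "equiv {1..n} r"
  shows "clique_graph n ({1..n} // r) = {(i,j) \<in> edges n. (i,j) \<in> r}"
proof (intro set_eqI iffI)
  fix e assume "e \<in> clique_graph n ({1..n} // r)"
  then obtain i j B where e: "e = (i,j)" "(i,j) \<in> edges n" "B \<in> {1..n} // r" "i \<in> B" "j \<in> B"
    unfolding clique_graph_def by auto
  then obtain k where "B = r `` {k}" unfolding quotient_def by auto
  hence "(k,i) \<in> r" "(k,j) \<in> r" using e by auto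
  hence "(i,j) \<in> r" using assms unfolding equiv_def sym_def trans_def by blast
  thus "e \<in> {(i,j) \<in> edges n. (i,j) \<in> r}" using e by auto
next
  fix e assume "e \<in> {(i,j) \<in> edges n. (i,j) \<in> r}"
  then obtain i j where e: "e = (i,j)" "(i,j) \<in> edges n" "(i,j) \<in> r" by (cases e) auto
  have i: "i \<in> {1..n}" using e unfolding edges_def by auto
  have "r `` {i} \<in> {1..n} // r" using i unfolding quotient_def by auto
  moreover have "i \<in> r `` {i}" using assms i unfolding equiv_def refl_on_def by auto
  moreover have "j \<in> r `` {i}" using e by auto
  ultimately show "e \<in> clique_graph n ({1..n} // r)" using e unfolding clique_graph_def by blast
qed

lemma phi_char: "phi n G = {(i,j) \<in> edges n. (i,j) \<in> graph_rel n G}"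
  unfolding phi_def components_def using clique_quotient[OF equiv_graph_rel] .

lemma partition_components: "partition_on {1..n} (components n G)"
  unfolding components_def by (rule partition_on_quotient[OF equiv_graph_rel])

lemma graph_rel_clique:
  assumes P: "partition_on {1..n} P"
  shows "graph_rel n (clique_graph n P) = {(x, y). \<exists>p \<in> P. x \<in> p \<and> y \<in> p}"
proof (intro set_eqI iffI)
  let ?E = "{(x, y). \<exists>p \<in> P. x \<in> p \<and> y \<in> p}"
  let ?R = "{(i, j). (i, j) \<in> clique_graph n P \<or> (j, i) \<in> clique_graph n P}"
  have eqv: "equiv {1..n} ?E" using equiv_partition_on[OF P] .
  have sub: "?R \<subseteq> ?E" unfolding clique_graph_def by auto
  have trE: "trans ?E" using eqv unfolding equiv_def by blast
  fix e assume e: "e \<in> graph_rel n (clique_graph n P)"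
  then obtain x y where xy: "e = (x,y)" "(x,y) \<in> ?R\<^sup>*" "x \<in> {1..n}" "y \<in> {1..n}"
    unfolding graph_rel_def by auto
  have "(x,y) \<in> Id \<union> ?E" using xy(2)
  proof (induction rule: rtrancl_induct)
    case base show ?case by simp
  next
    case (step y z)
    have yz: "(y,z) \<in> ?E" using step(2) sub by blast
    show ?case
    proof (cases "x = y")
      case True thus ?thesis using yz by simp
    next
      case False
      hence "(x,y) \<in> ?E" using step(3) by blast
      hence "(x,z) \<in> ?E" using yz trE unfolding trans_def by blast
      thus ?thesis by blast
    qed
  qed
  moreover have "(x,x) \<in> ?E" using eqv xy unfolding equiv_def refl_on_def by blast
  ultimately show "e \<in> ?E" using xy by auto
next
  fix e assume "e \<in> {(x, y). \<exists>p \<in> P. x \<in> p \<and> y \<in> p}"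
  then obtain x y p where e: "e = (x,y)" "p \<in> P" "x \<in> p" "y \<in> p" by auto
  have sub: "p \<subseteq> {1..n}" using P e(2) unfolding partition_on_def by auto
  let ?R = "{(i, j). (i, j) \<in> clique_graph n P \<or> (j, i) \<in> clique_graph n P}"
  have "(x,y) \<in> ?R\<^sup>*"
  proof (cases "x = y")
    case True thus ?thesis by simp
  next
    case False
    hence "(x,y) \<in> clique_graph n P \<or> (y,x) \<in> clique_graph n P"
      using e sub unfolding clique_graph_def edges_def by (cases "x < y") auto
    thus ?thesis by auto
  qed
  thus "e \<in> graph_rel n (clique_graph n P)" unfolding graph_rel_def using e sub by auto
qed

lemma components_clique:
  assumes P: "partition_on {1..n} P"
  shows "components n (clique_graph n P) = P"
  unfolding components_def graph_rel_clique[OF P] using partition_on_eq_quotient[OF P] .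

lemma phi_idem: "phi n (phi n G) = phi n G"
  unfolding phi_def components_clique[OF partition_components] ..

lemma phi_ext: "G \<subseteq> edges n \<Longrightarrow> G \<subseteq> phi n G"
  unfolding phi_char graph_rel_def edges_def by auto

lemma graph_rel_mono: "G \<subseteq> H \<Longrightarrow> graph_rel n G \<subseteq> graph_rel n H"
  unfolding graph_rel_def
  by (intro Int_mono rtrancl_mono) auto

lemma phi_mono: "G \<subseteq> H \<Longrightarrow> phi n G \<subseteq> phi n H"
  unfolding phi_char using graph_rel_mono by blast

lemma components_phi: "components n (phi n G) = components n G"
  unfolding phi_def using components_clique[OF partition_components] .

lemma phi_sub: "phi n G \<subseteq> edges n"
  unfolding phi_char by auto

lemma phi_DG: assumes "G \<in> DG n" shows "phi n G \<in> DG n"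
proof -
  have "G \<subseteq> phi n G" using assms phi_ext[of G n] unfolding DG_def by auto
  hence "phi n G \<noteq> {}" using assms unfolding DG_def by auto
  thus ?thesis using assms components_phi[of n G] phi_sub[of n G] unfolding DG_def by auto
qed

lemma finite_DG: "finite (DG n)"
proof -
  have "finite (edges n)" unfolding edges_def
    by (rule finite_subset[of _ "{1..n} \<times> {1..n}"]) auto
  moreover have "DG n \<subseteq> Pow (edges n)" unfolding DG_def by auto
  ultimately show ?thesis by (meson finite_Pow_iff finite_subset)
qed


lemma order_complex_image:
  assumes inj: "inj_on f A" and emb: "\<forall>x\<in>A. \<forall>y\<in>A. le x y \<longleftrightarrow> f x \<subseteq> f y"
  shows "order_complex (f ` A) (\<subseteq>) = (\<lambda>c. f ` c) ` order_complex A le"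
proof (intro set_eqI iffI)
  fix c assume c: "c \<in> order_complex (f ` A) (\<subseteq>)"
  define d where "d = {x\<in>A. f x \<in> c}"
  have fd: "f ` d = c" using c unfolding d_def order_complex_def by auto
  have "inj_on f d" using inj d_def by (auto intro: inj_on_subset)
  moreover have "finite c" using c unfolding order_complex_def by auto
  ultimately have "finite d" using finite_imageD[of f d] fd by simp
  moreover have "d \<noteq> {}" using fd c unfolding order_complex_def by auto
  moreover have "\<forall>x\<in>d. \<forall>y\<in>d. le x y \<or> le y x"
  proof (intro ballI)
    fix x y assume xy: "x \<in> d" "y \<in> d"
    hence "f x \<subseteq> f y \<or> f y \<subseteq> f x" using c unfolding d_def order_complex_def by blast
    thus "le x y \<or> le y x" using emb xy unfolding d_def by blast
  qed
  ultimately have "d \<in> order_complex A le" unfolding order_complex_def d_def by auto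
  thus "c \<in> (\<lambda>c. f ` c) ` order_complex A le" using fd by blast
next
  fix c assume "c \<in> (\<lambda>c. f ` c) ` order_complex A le"
  then obtain d where d: "c = f ` d" "d \<in> order_complex A le" by auto
  have d1: "d \<noteq> {}" "finite d" "d \<subseteq> A" "\<forall>x\<in>d. \<forall>y\<in>d. le x y \<or> le y x"
    using d(2) unfolding order_complex_def by auto
  have "\<forall>u\<in>f ` d. \<forall>v\<in>f ` d. u \<subseteq> v \<or> v \<subseteq> u"
  proof (intro ballI)
    fix u v assume "u \<in> f ` d" "v \<in> f ` d"
    then obtain x y where "x \<in> d" "y \<in> d" "u = f x" "v = f y" by blast
    thus "u \<subseteq> v \<or> v \<subseteq> u" using d1 emb by blast
  qed
  thus "c \<in> order_complex (f ` A) (\<subseteq>)" using d1 unfolding order_complex_def d(1) by blast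
qed

lemma clique_bottom: "clique_graph n (bottom_partition n) = {}"
  unfolding clique_graph_def bottom_partition_def edges_def by auto

lemma edge_in:
  assumes "B \<in> P" "i \<in> B" "j \<in> B" "j \<noteq> i" "B \<subseteq> {1..n}"
  shows "(min i j, max i j) \<in> clique_graph n P"
proof -
  have "i \<in> {1..n}" "j \<in> {1..n}" using assms by auto
  hence e: "(min i j, max i j) \<in> edges n" using assms(4) unfolding edges_def
    by (cases "i \<le> j") (auto simp: min_def max_def)
  have "min i j \<in> B" "max i j \<in> B" using assms by (cases "i \<le> j"; simp add: min_def max_def)+
  thus ?thesis using e assms(1) unfolding clique_graph_def by blast
qed

lemma refines_iff:
  assumes P: "P \<in> Pi_lattice n" and Q: "Q \<in> Pi_lattice n"
  shows "refines P Q \<longleftrightarrow> clique_graph n P \<subseteq> clique_graph n Q"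
proof
  assume r: "refines P Q"
  show "clique_graph n P \<subseteq> clique_graph n Q"
  proof
    fix e assume "e \<in> clique_graph n P"
    then obtain i j B where e: "e = (i,j)" "(i,j) \<in> edges n" "B \<in> P" "i \<in> B" "j \<in> B"
      unfolding clique_graph_def by auto
    then obtain C where "C \<in> Q" "B \<subseteq> C" using r unfolding refines_def by meson
    thus "e \<in> clique_graph n Q" using e unfolding clique_graph_def by auto
  qed
next
  assume sub: "clique_graph n P \<subseteq> clique_graph n Q"
  have pP: "partition_on {1..n} P" and pQ: "partition_on {1..n} Q"
    using P Q unfolding Pi_lattice_def by auto
  show "refines P Q" unfolding refines_def
  proof
    fix B assume B: "B \<in> P"
    have "B \<noteq> {}" using pP B unfolding partition_on_def by auto
    then obtain i where i: "i \<in> B" by auto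
    have Bsub: "B \<subseteq> {1..n}" using pP B unfolding partition_on_def by auto
    then obtain C where C: "C \<in> Q" "i \<in> C" using pQ i unfolding partition_on_def by blast
    have "B \<subseteq> C"
    proof
      fix j assume j: "j \<in> B"
      show "j \<in> C"
      proof (cases "j = i")
        case True thus ?thesis using C by simp
      next
        case False
        have "(min i j, max i j) \<in> clique_graph n P"
          using edge_in[OF B i j False Bsub] .
        hence "(min i j, max i j) \<in> clique_graph n Q" using sub by blast
        then obtain C' where C': "C' \<in> Q" "min i j \<in> C'" "max i j \<in> C'"
          unfolding clique_graph_def by blast
        hence C'': "i \<in> C'" "j \<in> C'" by (cases "i \<le> j"; simp add: min_def max_def)+
        have "C' = C"
        proof (rule ccontr)
          assume "C' \<noteq> C"
          hence "C' \<inter> C = {}" using disjointD[OF partition_onD2[OF pQ] C'(1) C(1)] by simp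
          thus False using C''(1) C(2) by blast
        qed
        thus ?thesis using C'' by simp
      qed
    qed
    thus "\<exists>C\<in>Q. B \<subseteq> C" using C by blast
  qed
qed

lemma inj_clique: "inj_on (clique_graph n) (Pi_lattice n)"
  by (rule inj_onI) (metis components_clique Pi_lattice_def mem_Collect_eq)

lemma fixed_points:
  assumes n: "n \<ge> 2"
  shows "{G \<in> DG n. phi n G = G} = clique_graph n ` Pi_bar n"
proof (intro set_eqI iffI)
  fix G assume G: "G \<in> {G \<in> DG n. phi n G = G}"
  define P where "P = components n G"
  have GP: "G = clique_graph n P" using G unfolding P_def phi_def by auto
  have "P \<in> Pi_lattice n" unfolding P_def Pi_lattice_def using partition_components by auto
  moreover have "P \<noteq> top_partition n" using G unfolding P_def DG_def top_partition_def by auto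
  moreover have "P \<noteq> bottom_partition n" using G GP clique_bottom[of n] unfolding DG_def by auto
  ultimately have "P \<in> Pi_bar n" unfolding Pi_bar_def by auto
  thus "G \<in> clique_graph n ` Pi_bar n" using GP by blast
next
  fix G assume "G \<in> clique_graph n ` Pi_bar n"
  then obtain P where P: "P \<in> Pi_bar n" "G = clique_graph n P" by auto
  have pP: "partition_on {1..n} P" using P unfolding Pi_bar_def Pi_lattice_def by auto
  have cG: "components n G = P" using P(2) components_clique[OF pP] by simp
  have ph: "phi n G = G" unfolding phi_def cG using P by simp
  have fin: "finite P" using finite_elements[OF _ pP] by simp
  have "P \<noteq> {}" using pP n unfolding partition_on_def by auto
  hence "card P \<noteq> 0" using fin by simp
  moreover have "card P \<noteq> 1"
  proof
    assume "card P = 1"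
    then obtain B where "P = {B}" by (meson card_1_singletonE)
    hence "P = top_partition n" using pP unfolding partition_on_def top_partition_def by auto
    thus False using P unfolding Pi_bar_def by auto
  qed
  ultimately have c2: "card P \<ge> 2" by linarith
  have "G \<noteq> {}"
  proof
    assume G0: "G = {}"
    have single: "\<forall>B\<in>P. \<exists>i\<in>{1..n}. B = {i}"
    proof
      fix B assume B: "B \<in> P"
      have "B \<noteq> {}" using pP B unfolding partition_on_def by auto
      then obtain i where i: "i \<in> B" by auto
      have Bsub: "B \<subseteq> {1..n}" using pP B unfolding partition_on_def by auto
      have "\<forall>j\<in>B. j = i"
      proof (rule ccontr)
        assume "\<not> (\<forall>j\<in>B. j = i)"
        then obtain j where j: "j \<in> B" "j \<noteq> i" by auto
        have "(min i j, max i j) \<in> clique_graph n P"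
          using edge_in[OF B i j(1) _ Bsub] j(2) by simp
        thus False using G0 P by simp
      qed
      thus "\<exists>i\<in>{1..n}. B = {i}" using i Bsub by blast
    qed
    have "P = bottom_partition n"
    proof (intro set_eqI iffI)
      fix B assume "B \<in> P" thus "B \<in> bottom_partition n"
        using single unfolding bottom_partition_def by auto
    next
      fix B assume "B \<in> bottom_partition n"
      then obtain i where i: "i \<in> {1..n}" "B = {i}" unfolding bottom_partition_def by auto
      then obtain C where C: "C \<in> P" "i \<in> C" using pP unfolding partition_on_def by blast
      thus "B \<in> P" using single i by force
    qed
    thus False using P unfolding Pi_bar_def by auto
  qed
  moreover have "G \<subseteq> edges n" using P unfolding clique_graph_def by auto
  ultimately have "G \<in> DG n" unfolding DG_def using cG c2 by auto
  thus "G \<in> {G \<in> DG n. phi n G = G}" using ph by auto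
qed


theorem mainTheorem4:
  fixes n :: nat
  assumes "n \<ge> 2"
  shows "collapses_onto (Bd (DG n))
           ((\<lambda>c. clique_graph n ` c) ` order_complex (Pi_bar n) refines)"
proof -
  have c: "collapses_onto (order_complex (DG n) (\<subseteq>)) (order_complex {G \<in> DG n. phi n G = G} (\<subseteq>))"
  proof (rule closure_collapse[of "DG n" "phi n", OF finite_DG])
    show "\<forall>x\<in>DG n. phi n x \<in> DG n \<and> x \<subseteq> phi n x \<and> phi n (phi n x) = phi n x"
    proof
      fix x assume x: "x \<in> DG n"
      have "x \<subseteq> edges n" using x unfolding DG_def by simp
      thus "phi n x \<in> DG n \<and> x \<subseteq> phi n x \<and> phi n (phi n x) = phi n x"
        using phi_DG[OF x] phi_ext[of x n] phi_idem[of n x] by simp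
    qed
    show "\<forall>x\<in>DG n. \<forall>y\<in>DG n. x \<subseteq> y \<longrightarrow> phi n x \<subseteq> phi n y"
      using phi_mono by (intro ballI impI)
  qed
  have sub: "Pi_bar n \<subseteq> Pi_lattice n" unfolding Pi_bar_def by auto
  have "order_complex (clique_graph n ` Pi_bar n) (\<subseteq>)
      = (\<lambda>c. clique_graph n ` c) ` order_complex (Pi_bar n) refines"
    by (rule order_complex_image) (use inj_on_subset[OF inj_clique sub] refines_iff sub in auto)
  thus ?thesis using c fixed_points[OF assms] unfolding Bd_def by simp
qed

end
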